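(* Assume Assumptions A.1–A.6. Suppose $q:\Theta\to\mathbb{R}$ is bounded on $\Theta$ and continuous on $\Theta_{\#\#}$. Then for each $t\ge1$, the function $\theta\mapsto E(q(\theta_t^* )\mid\theta_0^*=\theta)$ is continuous on $\Theta_{\#\#}$.
   Context: Model: $\xi_t=a(X_{t-1})+b(X_{t-1})e_t$ with $X_t=(\xi_t,\dots,\xi_{t-p+1})\in\mathbb{R}^p$, $\{e_t\}$ i.i.d. $\|\cdot\|$ Euclidean, $\Theta=\{\theta:\|\theta\|=1\}$, $\mathbb{R}^p_0=\mathbb{R}^p\setminus\{0\}$, $H_0=\{x:\min_i|x_i|=0\}$, $\Theta_\#=\Theta\setminus H_0$. A.1: $e_t$ has Lebesgue density $f$ locally bounded away from $0$; $b$ positive, locally bounded, locally bounded away from $0$. A.2: $\sup_u(1+|u|)f(u)<\infty$, $E|e_1|^{r_0}<\infty$ for some $r_0>0$. A.3: $a(x)/(1+\|x\|)$, $b(x)/(1+\|x\|)$ bounded. A.4: bounded $a_*,b_*$ on $\Theta$ with $\sup_{\theta}|a(w\theta)/w-a_*(\theta)|\to0$, $\sup_\theta|b(w\theta)/w-b_*(\theta)|\to0$ as $w\to\infty$; $a^*(x)=a_*(x/\|x\|)\|x\|$, $b^*(x)=b_*(x/\|x\|)\|x\|$, $a^*(0)=b^*(0)=0$. A.5: if $p>1$, $\max(|a^*|,b^* )$ locally bounded away from $0$ on $\mathbb{R}^p_0$ and $b^*$ locally bounded away from $0$ on $\mathbb{R}^p\setminus H_0$. A.6: if $p>1$, there are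 $(p-1)$-dimensional hyperplanes $H_1,\dots,H_m$ through the origin with $a^*,b^*$ continuous off $\bigcup_jH_j$. $F\theta=(\theta_2,\dots,\theta_p,\theta_1)$; $\Theta_{\#\#}=\{\theta\in\Theta_\#:F^k\theta\notin H_j\ \forall j,k\}$. $z(x,u)=a^*(x)+b^*(x)u$, $w(x,u)=\|(z(x,u),x_1,\dots,x_{p-1})\|$; collapsed chain $\theta_t^*=(z(\theta^*_{t-1},e_t),\theta^*_{t-1,1},\dots,\theta^*_{t-1,p-1})/w(\theta^*_{t-1},e_t)$. *)

theory Defs
  imports "HOL-Probability.Probability"
begin

text \<open>Vectors in R^p are represented as real^'p with 'p a finite linearly ordered
index type; the coordinate at position k (0-based) in the order of 'p plays the
role of the (k+1)-th coordinate x_(k+1).\<close>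

definition pos :: "('p::{finite,linorder}) \<Rightarrow> nat" where
  "pos i = card {j. j < i}"

definition idx :: "nat \<Rightarrow> ('p::{finite,linorder})" where
  "idx k = (THE i. pos i = k)"

definition prepend :: "real \<Rightarrow> real^('p::{finite,linorder}) \<Rightarrow> real^('p::{finite,linorder})" where
  "prepend z x = (\<chi> i. if pos i = 0 then z else x $ idx (pos i - 1))"

definition cshift :: "real^('p::{finite,linorder}) \<Rightarrow> real^('p::{finite,linorder})" where
  "cshift x = (\<chi> i. x $ idx ((pos i + 1) mod CARD('p)))"

definition H0 :: "(real^('p::{finite,linorder})) set" where
  "H0 = {x. \<exists>i. x $ i = 0}"

definition Theta_sharp :: "(real^('p::{finite,linorder})) set" where
  "Theta_sharp = sphere 0 1 - H0"

text \<open>Theta_## for hyperplanes H_j = {x. n_j \<bullet> x = 0}, n_j \<in> N\<close>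
definition Theta_ss :: "(real^('p::{finite,linorder})) set \<Rightarrow> (real^('p::{finite,linorder})) set" where
  "Theta_ss N = {\<theta> \<in> Theta_sharp. \<forall>n\<in>N. \<forall>k. n \<bullet> ((cshift ^^ k) \<theta>) \<noteq> 0}"

text \<open>g^*(x) = g_*(x/|x|) |x|  (equals 0 at x = 0)\<close>
definition star :: "('a::real_normed_vector \<Rightarrow> real) \<Rightarrow> 'a \<Rightarrow> real" where
  "star g x = g (x /\<^sub>R norm x) * norm x"

definition zfun :: "(real^('p::{finite,linorder}) \<Rightarrow> real) \<Rightarrow> (real^('p::{finite,linorder}) \<Rightarrow> real) \<Rightarrow> real^('p::{finite,linorder}) \<Rightarrow> real \<Rightarrow> real" where
  "zfun as bs x u = star as x + star bs x * u"

definition wfun :: "(real^('p::{finite,linorder}) \<Rightarrow> real) \<Rightarrow> (real^('p::{finite,linorder}) \<Rightarrow> real) \<Rightarrow> real^('p::{finite,linorder}) \<Rightarrow> real \<Rightarrow> real" where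
  "wfun as bs x u = norm (prepend (zfun as bs x u) x)"

definition cstep :: "(real^('p::{finite,linorder}) \<Rightarrow> real) \<Rightarrow> (real^('p::{finite,linorder}) \<Rightarrow> real) \<Rightarrow> real^('p::{finite,linorder}) \<Rightarrow> real \<Rightarrow> real^('p::{finite,linorder})" where
  "cstep as bs x u = (1 / wfun as bs x u) *\<^sub>R prepend (zfun as bs x u) x"

text \<open>theta*_n as a function of theta*_0 = theta and the innovations e_1, e_2, ...\<close>
fun cchain :: "(real^('p::{finite,linorder}) \<Rightarrow> real) \<Rightarrow> (real^('p::{finite,linorder}) \<Rightarrow> real) \<Rightarrow> real^('p::{finite,linorder}) \<Rightarrow> (nat \<Rightarrow> real) \<Rightarrow> nat \<Rightarrow> real^('p::{finite,linorder})" where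
  "cchain as bs \<theta> e 0 = \<theta>"
| "cchain as bs \<theta> e (Suc n) = cstep as bs (cchain as bs \<theta> e n) (e (Suc n))"

definition loc_bdd :: "('a::metric_space \<Rightarrow> real) \<Rightarrow> bool" where
  "loc_bdd g \<longleftrightarrow> (\<forall>x. \<exists>e>0. \<exists>M. \<forall>y\<in>ball x e. \<bar>g y\<bar> \<le> M)"

definition loc_bdd_away0 :: "'a::metric_space set \<Rightarrow> ('a \<Rightarrow> real) \<Rightarrow> bool" where
  "loc_bdd_away0 S g \<longleftrightarrow> (\<forall>x\<in>S. \<exists>e>0. \<exists>c>0. \<forall>y\<in>S \<inter> ball x e. c \<le> \<bar>g y\<bar>)"

end

theory Submission
  imports Defs
begin

lemma pos_less: "pos (i::'p::{finite,linorder}) < CARD('p)"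
proof -
  have "{j. j < i} \<subset> (UNIV::'p set)" by auto
  then show ?thesis unfolding pos_def by (simp add: psubset_card_mono)
qed

lemma pos_mono: "(i::'p::{finite,linorder}) < j \<Longrightarrow> pos i < pos j"
proof -
  assume "i < j"
  then have "{k. k < i} \<subset> {k. k < j}" by auto
  then show ?thesis unfolding pos_def by (simp add: psubset_card_mono)
qed

lemma pos_inj: "inj (pos :: 'p::{finite,linorder} \<Rightarrow> nat)"
  by (metis injI linorder_neqE_nat linorder_neq_iff pos_mono)

lemma pos_range: "range (pos :: 'p::{finite,linorder} \<Rightarrow> nat) = {..<CARD('p)}"
proof -
  have "range (pos :: 'p \<Rightarrow> nat) \<subseteq> {..<CARD('p)}" using pos_less by auto
  moreover have "card (range (pos :: 'p \<Rightarrow> nat)) = card {..<CARD('p)}"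
    using card_image[OF pos_inj] by simp
  ultimately show ?thesis by (simp add: card_subset_eq)
qed

lemma pos_idx: "k < CARD('p::{finite,linorder}) \<Longrightarrow> pos (idx k :: 'p) = k"
proof -
  assume "k < CARD('p)"
  then obtain i :: 'p where i: "pos i = k" using pos_range by (metis imageE lessThan_iff)
  have "\<exists>!i::'p. pos i = k" using i pos_inj by (metis injD)
  then show ?thesis unfolding idx_def by (rule theI')
qed

lemma idx_pos: "idx (pos (i::'p::{finite,linorder})) = i"
  by (metis pos_idx pos_less pos_inj injD)

lemma cshift_pow: "((cshift ^^ k) x) $ i = x $ idx ((pos (i::'p::{finite,linorder}) + k) mod CARD('p))"
proof (induction k arbitrary: i)
  case 0
  then show ?case by (simp add: pos_less idx_pos)
next
  case (Suc k)
  have m: "(pos i + 1) mod CARD('p) < CARD('p)" by simp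
  have "((cshift ^^ Suc k) x) $ i = ((cshift ^^ k) x) $ idx ((pos i + 1) mod CARD('p))"
    by (simp add: cshift_def)
  also have "\<dots> = x $ idx (((pos i + 1) mod CARD('p) + k) mod CARD('p))"
    using Suc pos_idx[OF m] by simp
  also have "((pos i + 1) mod CARD('p) + k) mod CARD('p) = (pos i + Suc k) mod CARD('p)"
    by (simp add: mod_add_left_eq)
  finally show ?case .
qed

lemma cshift_pow_card: "(cshift ^^ CARD('p)) (x::real^'p::{finite,linorder}) = x"
  by (simp add: vec_eq_iff cshift_pow pos_less idx_pos)

lemma cshift_pow_add: "(cshift ^^ k) (x + y) = (cshift ^^ k) x + (cshift ^^ k) (y::real^'p::{finite,linorder})"
  by (simp add: vec_eq_iff cshift_pow)

lemma cshift_pow_scale: "(cshift ^^ k) (c *\<^sub>R x) = c *\<^sub>R (cshift ^^ k) (x::real^'p::{finite,linorder})"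
  by (simp add: vec_eq_iff cshift_pow)

lemma cshift_prepend:
  fixes s :: "real^'p::{finite,linorder}"
  shows "cshift (prepend z s) = s + (z - s $ idx (CARD('p) - 1)) *\<^sub>R axis (idx (CARD('p) - 1)) 1"
proof (subst vec_eq_iff, intro allI)
  fix i :: 'p
  let ?l = "idx (CARD('p) - 1) :: 'p"
  have pl: "pos ?l = CARD('p) - 1" by (rule pos_idx) simp
  have m: "(pos i + 1) mod CARD('p) < CARD('p)" by simp
  show "cshift (prepend z s) $ i = (s + (z - s $ ?l) *\<^sub>R axis ?l 1) $ i"
  proof (cases "i = ?l")
    case True
    have "pos (idx 0 :: 'p) = 0" by (rule pos_idx) simp
    then show ?thesis using pl True
      by (simp add: cshift_def prepend_def pos_idx[OF m] axis_def)
  next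
    case False
    then have "pos i \<noteq> CARD('p) - 1" using pl idx_pos by metis
    then have "pos i + 1 < CARD('p)" using pos_less[of i] by linarith
    then show ?thesis using False
      by (simp add: cshift_def prepend_def pos_idx axis_def idx_pos)
  qed
qed

lemma cshift_pow_prepend:
  fixes s :: "real^'p::{finite,linorder}"
  shows "(cshift ^^ k) (prepend z s) = (cshift ^^ (k + (CARD('p) - 1))) (s + (z - s $ idx (CARD('p) - 1)) *\<^sub>R axis (idx (CARD('p) - 1)) 1)"
proof -
  have c: "CARD('p) - 1 + 1 = CARD('p)" using finite_UNIV_card_ge_0 by (metis Suc_pred' add.commute plus_1_eq_Suc finite)
  have c: "Suc (CARD('p) - 1) = CARD('p)" by simp
  have "(cshift ^^ (k + (CARD('p) - 1))) (cshift (prepend z s)) = (cshift ^^ k) ((cshift ^^ (CARD('p) - 1)) (cshift (prepend z s)))"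
    by (simp only: funpow_add comp_def)
  also have "(cshift ^^ (CARD('p) - 1)) (cshift (prepend z s)) = (cshift ^^ Suc (CARD('p) - 1)) (prepend z s)"
    by (simp only: funpow_Suc_right comp_def)
  also have "\<dots> = prepend z s" using c cshift_pow_card by metis
  finally show ?thesis by (simp add: cshift_prepend)
qed

lemma T_iff: "x \<in> Theta_ss N \<longleftrightarrow> norm x = 1 \<and> (\<forall>i. x $ i \<noteq> 0) \<and> (\<forall>n\<in>N. \<forall>k. n \<bullet> (cshift ^^ k) x \<noteq> 0)"
  by (auto simp: Theta_ss_def Theta_sharp_def H0_def)

lemma root_unique:
  fixes s :: "real^'p::{finite,linorder}"
  assumes s: "s \<in> Theta_ss N" and n: "n \<in> N"
    and z1: "n \<bullet> (cshift ^^ k) (prepend z1 s) = 0" and z2: "n \<bullet> (cshift ^^ k) (prepend z2 s) = 0"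
  shows "z1 = z2"
proof (rule ccontr)
  assume ne: "z1 \<noteq> z2"
  let ?l = "idx (CARD('p) - 1) :: 'p"
  let ?m = "k + (CARD('p) - 1)"
  define A where "A = n \<bullet> (cshift ^^ ?m) s"
  define C where "C = n \<bullet> (cshift ^^ ?m) (axis ?l 1)"
  have L: "n \<bullet> (cshift ^^ k) (prepend z s) = A + (z - s $ ?l) * C" for z
    unfolding cshift_pow_prepend cshift_pow_add cshift_pow_scale A_def C_def
    by (simp add: inner_add_right)
  have A: "A \<noteq> 0" using s n unfolding T_iff A_def by blast
  have e: "(z1 - z2) * C = (A + (z1 - s $ ?l) * C) - (A + (z2 - s $ ?l) * C)" by (simp add: algebra_simps)
  have "(z1 - z2) * C = 0" unfolding e using z1 z2 L[of z1] L[of z2] by simp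
  with ne have "C = 0" by simp
  with z1 L[of z1] A show False by simp
qed

lemma roots_countable:
  fixes s :: "real^'p::{finite,linorder}"
  assumes s: "s \<in> Theta_ss N" and nN: "n \<in> N"
  shows "countable {z. n \<bullet> (cshift ^^ k) (prepend z s) = 0}"
proof -
  have "{z. n \<bullet> (cshift ^^ k) (prepend z s) = 0} \<subseteq> {SOME z. n \<bullet> (cshift ^^ k) (prepend z s) = 0}"
    using root_unique[OF s nN] by (smt (verit, del_insts) mem_Collect_eq singletonI someI subsetI)
  then show ?thesis by (meson countable_finite finite.emptyI finite_insert finite_subset)
qed

lemma prepend_nonzero:
  fixes s :: "real^'p::{finite,linorder}"
  assumes p: "CARD('p) > 1" and s: "\<forall>i. s $ i \<noteq> 0"
  shows "prepend z s \<noteq> 0"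
proof -
  have "pos (idx 1 :: 'p) = 1" using p by (simp add: pos_idx)
  then have "prepend z s $ idx 1 = s $ idx 0" by (simp add: prepend_def)
  with s show ?thesis by auto
qed

lemma cstep_in_T:
  fixes s :: "real^'p::{finite,linorder}"
  assumes p: "CARD('p) > 1" and s: "s \<in> Theta_ss N"
    and z0: "zfun as bs s y \<noteq> 0"
    and zr: "\<forall>n\<in>N. \<forall>k. n \<bullet> (cshift ^^ k) (prepend (zfun as bs s y) s) \<noteq> 0"
  shows "cstep as bs s y \<in> Theta_ss N"
proof -
  let ?z = "zfun as bs s y"
  let ?v = "prepend ?z s"
  have sc: "\<forall>i. s $ i \<noteq> 0" using s T_iff by blast
  have v0: "?v \<noteq> 0" using prepend_nonzero[OF p sc] .
  then have w: "norm ?v > 0" by simp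
  have c: "cstep as bs s y = (1 / norm ?v) *\<^sub>R ?v" by (simp add: cstep_def wfun_def)
  have "norm (cstep as bs s y) = 1" using w c by simp
  moreover have "\<forall>i. cstep as bs s y $ i \<noteq> 0"
  proof
    fix i :: 'p
    have "?v $ i \<noteq> 0" using z0 sc by (simp add: prepend_def)
    then show "cstep as bs s y $ i \<noteq> 0" using w c by simp
  qed
  moreover have "\<forall>n\<in>N. \<forall>k. n \<bullet> (cshift ^^ k) (cstep as bs s y) \<noteq> 0"
    using zr w c by (simp add: cshift_pow_scale)
  ultimately show ?thesis unfolding T_iff by blast
qed

lemma bad_countable:
  fixes s :: "real^'p::{finite,linorder}"
  assumes p: "CARD('p) > 1" and s: "s \<in> Theta_ss N" and b: "star bs s \<noteq> 0" and fN: "finite N"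
  shows "countable {y. cstep as bs s y \<notin> Theta_ss N}"
proof -
  define Z where "Z = {0} \<union> (\<Union>n\<in>N. \<Union>k. {z. n \<bullet> (cshift ^^ k) (prepend z s) = 0})"
  have "countable Z" unfolding Z_def using roots_countable[OF s] fN
    by (intro countable_Un countable_UN countable_finite[OF fN]) auto
  have "{y. cstep as bs s y \<notin> Theta_ss N} \<subseteq> (\<lambda>z. (z - star as s) / star bs s) ` Z"
  proof
    fix y assume y: "y \<in> {y. cstep as bs s y \<notin> Theta_ss N}"
    have "zfun as bs s y \<in> Z"
      using cstep_in_T[OF p s, of as bs y] y unfolding Z_def by auto
    moreover have "y = (zfun as bs s y - star as s) / star bs s" using b by (simp add: zfun_def)
    ultimately show "y \<in> (\<lambda>z. (z - star as s) / star bs s) ` Z" by blast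
  qed
  then show ?thesis using \<open>countable Z\<close> by (meson countable_image countable_subset)
qed

lemma prepend_cont: "continuous_on UNIV (\<lambda>x. prepend (fst x) (snd x :: real^'p::{finite,linorder}))"
  unfolding prepend_def
proof (intro continuous_on_vec_lambda)
  fix i :: 'p
  show "continuous_on UNIV (\<lambda>x::real \<times> (real, 'p) vec. if pos i = 0 then fst x else snd x $ idx (pos i - 1))"
    by (cases "pos i = 0") (simp_all add: continuous_intros continuous_on_component)
qed

lemma star_lim:
  fixes a as :: "real^'p::{finite,linorder} \<Rightarrow> real"
  assumes lim: "\<forall>\<epsilon>>0. \<exists>W. \<forall>w\<ge>W. \<forall>\<theta>\<in>sphere 0 1. \<bar>a (w *\<^sub>R \<theta>) / w - as \<theta>\<bar> < \<epsilon>"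
    and th: "\<theta> \<in> sphere 0 1"
  shows "(\<lambda>i. a (real (Suc i) *\<^sub>R \<theta>) / real (Suc i)) \<longlonglongrightarrow> as \<theta>"
proof (rule LIMSEQ_I)
  fix r :: real assume r: "0 < r"
  then obtain W where W: "\<forall>w\<ge>W. \<forall>\<theta>\<in>sphere 0 1. \<bar>a (w *\<^sub>R \<theta>) / w - as \<theta>\<bar> < r" using lim by blast
  show "\<exists>no. \<forall>n\<ge>no. norm (a (real (Suc n) *\<^sub>R \<theta>) / real (Suc n) - as \<theta>) < r"
  proof (intro exI allI impI)
    fix n assume "nat \<lceil>W\<rceil> \<le> n"
    then have "W \<le> real (Suc n)" by linarith
    then show "norm (a (real (Suc n) *\<^sub>R \<theta>) / real (Suc n) - as \<theta>) < r" using W th by auto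
  qed
qed

lemma star_meas:
  fixes a as :: "real^'p::{finite,linorder} \<Rightarrow> real"
  assumes am: "a \<in> borel_measurable borel"
  and lim: "\<forall>\<epsilon>>0. \<exists>W. \<forall>w\<ge>W. \<forall>\<theta>\<in>sphere 0 1. \<bar>a (w *\<^sub>R \<theta>) / w - as \<theta>\<bar> < \<epsilon>"
  shows "star as \<in> borel_measurable borel"
proof (rule borel_measurable_LIMSEQ_real)
  fix x :: "(real, 'p) vec"
  show "(\<lambda>i. a (real (Suc i) *\<^sub>R (x /\<^sub>R norm x)) / real (Suc i) * norm x) \<longlonglongrightarrow> star as x"
  proof (cases "x = 0")
    case True
    then show ?thesis by (simp add: star_def)
  next
    case False
    then have "x /\<^sub>R norm x \<in> sphere 0 1" by simp
    from tendsto_mult_right[OF star_lim[OF lim this], of "norm x"]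
    show ?thesis by (simp add: star_def)
  qed
next
  fix i
  have [measurable]: "a \<in> borel_measurable borel" by (rule am)
  show "(\<lambda>x::(real, 'p) vec. a (real (Suc i) *\<^sub>R (x /\<^sub>R norm x)) / real (Suc i) * norm x) \<in> borel_measurable borel"
    by measurable
qed

lemma cstep_meas:
  assumes sa: "star as \<in> borel_measurable borel" and sb: "star bs \<in> borel_measurable borel"
    and X: "X \<in> borel_measurable M" and U: "U \<in> borel_measurable M"
  shows "(\<lambda>e. cstep as bs (X e :: real^'p::{finite,linorder}) (U e)) \<in> borel_measurable M"
proof -
  have [measurable]: "star as \<in> borel_measurable borel" "star bs \<in> borel_measurable borel"
    "X \<in> borel_measurable M" "U \<in> borel_measurable M" using assms by auto
  have Z: "(\<lambda>e. zfun as bs (X e) (U e)) \<in> borel_measurable M"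
    unfolding zfun_def by measurable
  have P: "(\<lambda>e. prepend (zfun as bs (X e) (U e)) (X e)) \<in> borel_measurable M"
    by (rule borel_measurable_continuous_Pair[OF Z X prepend_cont])
  show ?thesis unfolding cstep_def wfun_def using P by measurable
qed

lemma star_isCont:
  fixes g :: "real^'p::{finite,linorder} \<Rightarrow> real"
  assumes c: "continuous_on (UNIV - (\<Union>n\<in>N. {x. n \<bullet> x = 0})) g"
    and fN: "finite N" and s: "s \<in> Theta_ss N"
  shows "isCont g s"
proof -
  have o: "open (UNIV - (\<Union>n\<in>N. {x::(real,'p) vec. n \<bullet> x = 0}))"
    using fN by (intro open_Diff open_UNIV closed_UN) (auto simp: closed_hyperplane)
  have "s \<in> UNIV - (\<Union>n\<in>N. {x. n \<bullet> x = 0})"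
    using s unfolding T_iff by (metis (mono_tags, lifting) DiffI UNIV_I UN_E funpow_0 mem_Collect_eq)
  then show ?thesis using c o continuous_on_eq_continuous_at by blast
qed

lemma cstep_isCont:
  fixes s :: "real^'p::{finite,linorder}"
  assumes ca: "isCont (star as) s" and cb: "isCont (star bs) s"
    and nz: "prepend (zfun as bs s u) s \<noteq> 0"
  shows "isCont (\<lambda>x. cstep as bs x u) s"
proof -
  have h1: "isCont (\<lambda>x. (zfun as bs x u, x)) s"
    unfolding zfun_def using ca cb by (intro continuous_intros) auto
  have h2: "isCont (\<lambda>p. prepend (fst p) (snd p :: (real,'p) vec)) (zfun as bs s u, s)"
    using prepend_cont continuous_on_eq_continuous_at open_UNIV by blast
  have g: "isCont (\<lambda>x. prepend (zfun as bs x u) x) s"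
    using isCont_o2[OF h1 h2] by simp
  show ?thesis unfolding cstep_def wfun_def
    using g nz by (intro continuous_intros) auto
qed

lemma chain_isCont:
  fixes \<theta> :: "real^'p::{finite,linorder}"
  assumes p: "CARD('p) > 1" and fN: "finite N"
    and ca: "continuous_on (UNIV - (\<Union>n\<in>N. {x. n \<bullet> x = 0})) (star as)"
    and cb: "continuous_on (UNIV - (\<Union>n\<in>N. {x. n \<bullet> x = 0})) (star bs)"
  shows "(\<forall>j<m. cchain as bs \<theta> e j \<in> Theta_ss N) \<Longrightarrow> isCont (\<lambda>\<theta>'. cchain as bs \<theta>' e m) \<theta>"
proof (induction m)
  case 0
  then show ?case by simp
next
  case (Suc m)
  let ?s = "cchain as bs \<theta> e m"
  have sT: "?s \<in> Theta_ss N" using Suc.prems by simp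
  have IH: "isCont (\<lambda>\<theta>'. cchain as bs \<theta>' e m) \<theta>" using Suc by simp
  have nz: "prepend (zfun as bs ?s (e (Suc m))) ?s \<noteq> 0"
    using prepend_nonzero[OF p] sT T_iff by blast
  have "isCont (\<lambda>x. cstep as bs x (e (Suc m))) ?s"
    using cstep_isCont[OF star_isCont[OF ca fN sT] star_isCont[OF cb fN sT] nz] .
  from isCont_o2[OF IH this] show ?case by simp
qed

lemma cshift_pow_eq: "(cshift ^^ k) x = (\<chi> i. x $ idx ((pos (i::'p::{finite,linorder}) + k) mod CARD('p)))"
  by (simp add: vec_eq_iff cshift_pow)

lemma T_borel:
  assumes fN: "finite N"
  shows "Theta_ss N \<in> sets (borel :: (real^'p::{finite,linorder}) measure)"
proof -
  have eq: "Theta_ss N = sphere 0 1 \<inter> (\<Inter>i. {x. x $ i \<noteq> 0}) \<inter> (\<Inter>n\<in>N. \<Inter>k\<in>UNIV. {x::(real,'p) vec. n \<bullet> (cshift ^^ k) x \<noteq> 0})"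
    by (auto simp: T_iff)
  have s1: "sphere 0 1 \<in> sets (borel :: (real,'p) vec measure)" by (simp add: borel_closed)
  have s2: "(\<Inter>i. {x::(real,'p) vec. x $ i \<noteq> 0}) \<in> sets borel"
    by (intro borel_open open_INT) (auto intro!: open_Collect_neq continuous_intros continuous_on_component)
  have s3: "(\<Inter>n\<in>N. \<Inter>k\<in>UNIV. {x::(real,'p) vec. n \<bullet> (cshift ^^ k) x \<noteq> 0}) \<in> sets borel"
  proof (intro sets.countable_INT'' countable_finite[OF fN])
    fix n :: "(real,'p) vec" and k :: nat
    show "{x::(real,'p) vec. n \<bullet> (cshift ^^ k) x \<noteq> 0} \<in> sets borel"
      unfolding cshift_pow_eq
      by (intro borel_open open_Collect_neq continuous_intros continuous_on_vec_lambda continuous_on_component)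
  qed auto
  show ?thesis unfolding eq using s1 s2 s3 by auto
qed

lemma mu_prob:
  assumes fm: "f \<in> borel_measurable lborel" and fi: "(\<integral>\<^sup>+u. ennreal (f u) \<partial>lborel) = 1"
  shows "prob_space (density lborel (\<lambda>x. ennreal (f x)))"
proof (rule prob_spaceI)
  show "emeasure (density lborel (\<lambda>x. ennreal (f x))) (space (density lborel (\<lambda>x. ennreal (f x)))) = 1"
    using fm fi by (simp add: emeasure_density)
qed

lemma chain_local: "(\<forall>i. 1 \<le> i \<and> i \<le> m \<longrightarrow> e i = e' i) \<Longrightarrow> cchain as bs \<theta> e m = cchain as bs \<theta> e' m"
  by (induction m) auto

lemma chain_meas:
  assumes sa: "star as \<in> borel_measurable borel" and sb: "star bs \<in> borel_measurable borel"
  shows "m \<le> t \<Longrightarrow> (\<lambda>e. cchain as bs (\<theta>::real^'p::{finite,linorder}) e m) \<in> borel_measurable (PiM {1..t} (\<lambda>_. density lborel g))"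
proof (induction m)
  case 0
  then show ?case by simp
next
  case (Suc m)
  have U: "(\<lambda>e. e (Suc m)) \<in> measurable (PiM {1..t} (\<lambda>_. density lborel g)) (density lborel g)"
    using Suc.prems by (intro measurable_component_singleton) auto
  then have U': "(\<lambda>e. e (Suc m)) \<in> borel_measurable (PiM {1..t} (\<lambda>_. density lborel g))"
    by (simp cong: measurable_cong_sets)
  show ?case using cstep_meas[OF sa sb Suc.IH U'] Suc.prems by simp
qed

lemma AE_PiM_insert:
  assumes ps: "product_sigma_finite M" and fin: "finite I" and i: "i \<notin> I"
    and P: "Measurable.pred (PiM (insert i I) M) P"
    and ae: "AE x in PiM I M. AE y in M i. P (x(i := y))"
  shows "AE x in PiM (insert i I) M. P x"
proof -
  interpret product_sigma_finite M by (rule ps)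
  have [measurable]: "Measurable.pred (PiM (insert i I) M) P" by (rule P)
  have "integral\<^sup>N (PiM (insert i I) M) (indicator {x. \<not> P x}) =
      (\<integral>\<^sup>+ x. (\<integral>\<^sup>+ y. indicator {x. \<not> P x} (x(i := y)) \<partial>(M i)) \<partial>(PiM I M))"
    by (rule product_nn_integral_insert[OF fin i]) measurable
  also have "\<dots> = (\<integral>\<^sup>+ x. 0 \<partial>(PiM I M))"
  proof (rule nn_integral_cong_AE)
    show "AE x in PiM I M. (\<integral>\<^sup>+ y. indicator {x. \<not> P x} (x(i := y)) \<partial>(M i)) = 0"
      using ae
    proof (rule eventually_mono)
      fix x assume "AE y in M i. P (x(i := y))"
      then have "AE y in M i. indicator {x. \<not> P x} (x(i := y)) = (0::ennreal)"
        by (rule eventually_mono) auto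
      then show "(\<integral>\<^sup>+ y. indicator {x. \<not> P x} (x(i := y)) \<partial>(M i)) = 0"
        by (simp add: nn_integral_cong_AE)
    qed
  qed
  finally have "integral\<^sup>N (PiM (insert i I) M) (indicator {x. \<not> P x}) = 0" by simp
  moreover have "{x \<in> space (PiM (insert i I) M). P x} \<in> sets (PiM (insert i I) M)" by measurable
  ultimately show ?thesis by (simp add: AE_iff_nn_integral)
qed

lemma AE_step:
  fixes s :: "real^'p::{finite,linorder}"
  assumes p: "CARD('p) > 1" and s: "s \<in> Theta_ss N" and b: "star bs s \<noteq> 0" and fN: "finite N"
    and fm: "f \<in> borel_measurable lborel"
  shows "AE y in density lborel (\<lambda>x. ennreal (f x)). cstep as bs s y \<in> Theta_ss N"
proof -
  have [measurable]: "f \<in> borel_measurable lborel" by (rule fm)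
  have c: "countable {y. cstep as bs s y \<notin> Theta_ss N}" by (rule bad_countable[OF p s b fN])
  have "AE y in lborel. y \<notin> {y. cstep as bs s y \<notin> Theta_ss N}"
    by (rule AE_not_in[OF countable_imp_null_set_lborel[OF c]])
  then have "AE y in lborel. 0 < ennreal (f y) \<longrightarrow> cstep as bs s y \<in> Theta_ss N"
    by (rule eventually_mono) auto
  then show ?thesis by (subst AE_density) auto
qed

lemma AE_chain:
  fixes \<theta> :: "real^'p::{finite,linorder}"
  assumes p: "CARD('p) > 1" and th: "\<theta> \<in> Theta_ss N" and fN: "finite N"
    and b: "\<forall>s\<in>Theta_ss N. star bs s \<noteq> 0"
    and fm: "f \<in> borel_measurable lborel" and prob: "prob_space (density lborel (\<lambda>x. ennreal (f x)))"
    and sa: "star as \<in> borel_measurable borel" and sb: "star bs \<in> borel_measurable borel"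
  shows "AE e in PiM {1..t} (\<lambda>_. density lborel (\<lambda>x. ennreal (f x))). \<forall>j\<le>t. cchain as bs \<theta> e j \<in> Theta_ss N"
proof (induction t)
  case 0
  then show ?case using th by simp
next
  case (Suc t)
  let ?mu = "density lborel (\<lambda>x. ennreal (f x))"
  have ps: "product_sigma_finite (\<lambda>_::nat. ?mu)"
    unfolding product_sigma_finite_def using prob_space_imp_sigma_finite[OF prob] by simp
  have ins: "{1..Suc t} = insert (Suc t) {1..t}" by auto
  have TB: "Theta_ss N \<in> sets (borel :: (real,'p) vec measure)" by (rule T_borel[OF fN])
  have P: "Measurable.pred (PiM (insert (Suc t) {1..t}) (\<lambda>_. ?mu)) (\<lambda>e. \<forall>j\<le>Suc t. cchain as bs \<theta> e j \<in> Theta_ss N)"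
  proof (unfold ins[symmetric], intro pred_intros_countable impI)
    fix j
    show "Measurable.pred (PiM {1..Suc t} (\<lambda>_. ?mu)) (\<lambda>e. j \<le> Suc t \<longrightarrow> cchain as bs \<theta> e j \<in> Theta_ss N)"
    proof (cases "j \<le> Suc t")
      case True
      then show ?thesis using pred_sets2[OF TB chain_meas[OF sa sb True]] by simp
    next
      case False
      then show ?thesis by simp
    qed
  qed
  have ae: "AE x in PiM {1..t} (\<lambda>_. ?mu). AE y in ?mu. \<forall>j\<le>Suc t. cchain as bs \<theta> (x(Suc t := y)) j \<in> Theta_ss N"
    using Suc.IH
  proof (rule eventually_mono)
    fix x assume x: "\<forall>j\<le>t. cchain as bs \<theta> x j \<in> Theta_ss N"
    have loc: "cchain as bs \<theta> (x(Suc t := y)) j = cchain as bs \<theta> x j" if "j \<le> t" for j y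
      using that by (intro chain_local) auto
    have sT: "cchain as bs \<theta> x t \<in> Theta_ss N" using x by simp
    show "AE y in ?mu. \<forall>j\<le>Suc t. cchain as bs \<theta> (x(Suc t := y)) j \<in> Theta_ss N"
      using AE_step[OF p sT b[rule_format, OF sT] fN fm, of as]
    proof (rule eventually_mono)
      fix y assume y: "cstep as bs (cchain as bs \<theta> x t) y \<in> Theta_ss N"
      show "\<forall>j\<le>Suc t. cchain as bs \<theta> (x(Suc t := y)) j \<in> Theta_ss N"
      proof (intro allI impI)
        fix j assume "j \<le> Suc t"
        then consider "j \<le> t" | "j = Suc t" by linarith
        then show "cchain as bs \<theta> (x(Suc t := y)) j \<in> Theta_ss N"
        proof cases
          case 1 then show ?thesis using loc x by simp
        next
          case 2 then show ?thesis using loc[of t y] y by simp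
        qed
      qed
    qed
  qed
  show ?case unfolding ins by (rule AE_PiM_insert[OF ps _ _ P ae]) auto
qed

theorem lemma5p5:
  fixes a b :: "real^('p::{finite,linorder}) \<Rightarrow> real"
    and f :: "real \<Rightarrow> real"
    and as bs :: "real^('p::{finite,linorder}) \<Rightarrow> real"
    and N :: "(real^('p::{finite,linorder})) set"
    and q :: "real^('p::{finite,linorder}) \<Rightarrow> real"
    and t :: nat
  assumes a_meas: "a \<in> borel_measurable borel" and b_meas: "b \<in> borel_measurable borel"
    and f_meas: "f \<in> borel_measurable lborel" and f_nonneg: "\<forall>u. 0 \<le> f u"
    and f_int: "(\<integral>\<^sup>+u. ennreal (f u) \<partial>lborel) = 1"
    and A1_f: "loc_bdd_away0 UNIV f"
    and A1_b: "\<forall>x. 0 < b x" "loc_bdd b" "loc_bdd_away0 UNIV b"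
    and A2_f: "\<exists>M. \<forall>u. (1 + \<bar>u\<bar>) * f u \<le> M"
    and A2_mom: "\<exists>r0>0. (\<integral>\<^sup>+u. ennreal (\<bar>u\<bar> powr r0 * f u) \<partial>lborel) < \<infinity>"
    and A3: "\<exists>M. \<forall>x. \<bar>a x\<bar> / (1 + norm x) \<le> M" "\<exists>M. \<forall>x. \<bar>b x\<bar> / (1 + norm x) \<le> M"
    and A4_bdd: "\<exists>M. \<forall>\<theta>\<in>sphere 0 1. \<bar>as \<theta>\<bar> \<le> M" "\<exists>M. \<forall>\<theta>\<in>sphere 0 1. \<bar>bs \<theta>\<bar> \<le> M"
    and A4_lim: "\<forall>\<epsilon>>0. \<exists>W. \<forall>w\<ge>W. \<forall>\<theta>\<in>sphere 0 1. \<bar>a (w *\<^sub>R \<theta>) / w - as \<theta>\<bar> < \<epsilon>"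
                "\<forall>\<epsilon>>0. \<exists>W. \<forall>w\<ge>W. \<forall>\<theta>\<in>sphere 0 1. \<bar>b (w *\<^sub>R \<theta>) / w - bs \<theta>\<bar> < \<epsilon>"
    and A5: "CARD('p) > 1 \<longrightarrow> loc_bdd_away0 (UNIV - {0}) (\<lambda>x. max \<bar>star as x\<bar> (star bs x))"
            "CARD('p) > 1 \<longrightarrow> loc_bdd_away0 (UNIV - H0) (star bs)"
    and A6: "finite N" "0 \<notin> N"
            "CARD('p) > 1 \<longrightarrow> continuous_on (UNIV - (\<Union>n\<in>N. {x. n \<bullet> x = 0})) (star as)"
            "CARD('p) > 1 \<longrightarrow> continuous_on (UNIV - (\<Union>n\<in>N. {x. n \<bullet> x = 0})) (star bs)"
    and q_meas: "q \<in> borel_measurable borel"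
    and q_bdd: "\<exists>M. \<forall>\<theta>\<in>sphere 0 1. \<bar>q \<theta>\<bar> \<le> M"
    and q_cont: "continuous_on (Theta_ss N) q"
    and t: "t \<ge> 1"
  shows "continuous_on (Theta_ss N)
           (\<lambda>\<theta>. \<integral>e. q (cchain as bs \<theta> e t) \<partial>(PiM {1..t} (\<lambda>_. density lborel f)))"
proof (cases "CARD('p) > 1")
  case False
  have "CARD('p) > 0" by simp
  with False have c1: "CARD('p) = 1" by linarith
  then obtain i0 :: 'p where U: "(UNIV :: 'p set) = {i0}" using card_1_singletonE by blast
  have inj: "inj_on (\<lambda>x::(real,'p) vec. x $ i0) (sphere 0 1)"
    by (rule inj_onI) (simp add: vec_eq_iff, metis U singletonD UNIV_I)
  have sub: "(\<lambda>x::(real,'p) vec. x $ i0) ` sphere 0 1 \<subseteq> {-1, 1}"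
  proof
    fix r assume "r \<in> (\<lambda>x::(real,'p) vec. x $ i0) ` sphere 0 1"
    then obtain x :: "(real,'p) vec" where x: "norm x = 1" "r = x $ i0" by auto
    have "\<bar>x $ i0\<bar> \<le> norm x" by (rule component_le_norm_cart)
    moreover have "(\<Sum>i\<in>UNIV. \<bar>x $ i\<bar>) = \<bar>x $ i0\<bar>" unfolding U by simp
    then have "norm x \<le> \<bar>x $ i0\<bar>" using norm_le_l1_cart[of x] by simp
    ultimately have "\<bar>r\<bar> = 1" using x by simp
    then show "r \<in> {-1, 1}" by auto
  qed
  have "finite (sphere 0 1 :: (real,'p) vec set)"
    using finite_imageD[OF finite_subset[OF sub] inj] by simp
  then have "finite (Theta_ss N)"
    by (rule finite_subset[rotated]) (auto simp: Theta_ss_def Theta_sharp_def)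
  then show ?thesis by (rule continuous_on_finite)
next
  case p: True
  let ?mu = "density lborel (\<lambda>x. ennreal (f x))"
  let ?P = "PiM {1..t} (\<lambda>_. ?mu)"
  let ?T = "Theta_ss N"
  have fN: "finite N" by (rule A6(1))
  have prob: "prob_space ?mu" by (rule mu_prob[OF f_meas f_int])
  interpret P: prob_space ?P by (rule prob_space_PiM) (use prob in auto)
  have sa: "star as \<in> borel_measurable borel" by (rule star_meas[OF a_meas A4_lim(1)])
  have sb: "star bs \<in> borel_measurable borel" by (rule star_meas[OF b_meas A4_lim(2)])
  have ca: "continuous_on (UNIV - (\<Union>n\<in>N. {x. n \<bullet> x = 0})) (star as)" using A6(3) p by simp
  have cb: "continuous_on (UNIV - (\<Union>n\<in>N. {x. n \<bullet> x = 0})) (star bs)" using A6(4) p by simp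
  have bnz: "\<forall>s\<in>?T. star bs s \<noteq> 0"
  proof
    fix s assume s: "s \<in> ?T"
    then have "s \<in> UNIV - H0" by (auto simp: Theta_ss_def Theta_sharp_def)
    then obtain e c where c: "c > 0" and cb: "\<forall>y\<in>(UNIV - H0) \<inter> ball s e. c \<le> \<bar>star bs y\<bar>" and e: "e > 0"
      using A5(2) p unfolding loc_bdd_away0_def by blast
    have "s \<in> (UNIV - H0) \<inter> ball s e" using \<open>s \<in> UNIV - H0\<close> e by simp
    with cb have "c \<le> \<bar>star bs s\<bar>" by blast
    with c show "star bs s \<noteq> 0" by auto
  qed
  obtain M where M: "\<forall>\<theta>\<in>sphere 0 1. \<bar>q \<theta>\<bar> \<le> M" using q_bdd by blast
  have TS: "?T \<subseteq> sphere 0 1" by (auto simp: Theta_ss_def Theta_sharp_def)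
  have meas: "(\<lambda>e. q (cchain as bs \<theta> e t)) \<in> borel_measurable ?P" for \<theta>
    using measurable_compose[OF chain_meas[OF sa sb order.refl] q_meas] by simp
  have AEc: "AE e in ?P. \<forall>j\<le>t. cchain as bs \<theta> e j \<in> ?T" if "\<theta> \<in> ?T" for \<theta>
    by (rule AE_chain[OF p that fN bnz f_meas prob sa sb])
  show ?thesis
  proof (rule continuous_on_sequentiallyI)
    fix x :: "nat \<Rightarrow> (real,'p) vec" and \<theta>
    assume xT: "\<forall>n. x n \<in> ?T" and th: "\<theta> \<in> ?T" and lim: "x \<longlonglongrightarrow> \<theta>"
    have "(\<lambda>n. \<integral>e. q (cchain as bs (x n) e t) \<partial>?P) \<longlonglongrightarrow> (\<integral>e. q (cchain as bs \<theta> e t) \<partial>?P)"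
    proof (rule integral_dominated_convergence[where w = "\<lambda>_. M"])
      show "(\<lambda>e. q (cchain as bs \<theta> e t)) \<in> borel_measurable ?P" by (rule meas)
      show "(\<lambda>e. q (cchain as bs (x i) e t)) \<in> borel_measurable ?P" for i by (rule meas)
      show "integrable ?P (\<lambda>_. M)" by (rule P.integrable_const)
      show "AE e in ?P. norm (q (cchain as bs (x i) e t)) \<le> M" for i
        using AEc[OF xT[rule_format, of i]] by (rule eventually_mono) (use M TS in auto)
      have "AE e in ?P. (\<forall>j\<le>t. cchain as bs \<theta> e j \<in> ?T) \<and> (\<forall>n. \<forall>j\<le>t. cchain as bs (x n) e j \<in> ?T)"
        using AEc[OF th] AEc[OF xT[rule_format]] by (simp add: AE_all_countable)
      then show "AE e in ?P. (\<lambda>n. q (cchain as bs (x n) e t)) \<longlonglongrightarrow> q (cchain as bs \<theta> e t)"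
      proof (rule eventually_mono)
        fix e assume e: "(\<forall>j\<le>t. cchain as bs \<theta> e j \<in> ?T) \<and> (\<forall>n. \<forall>j\<le>t. cchain as bs (x n) e j \<in> ?T)"
        have "isCont (\<lambda>\<theta>'. cchain as bs \<theta>' e t) \<theta>"
          by (rule chain_isCont[OF p fN ca cb]) (use e in auto)
        then have cl: "(\<lambda>n. cchain as bs (x n) e t) \<longlonglongrightarrow> cchain as bs \<theta> e t"
          using isCont_tendsto_compose lim by blast
        show "(\<lambda>n. q (cchain as bs (x n) e t)) \<longlonglongrightarrow> q (cchain as bs \<theta> e t)"
          using q_cont[unfolded continuous_on_sequentially] cl e by (auto simp: comp_def)
      qed
    qed
    then show "(\<lambda>n. \<integral>e. q (cchain as bs (x n) e t) \<partial>?P) \<longlonglongrightarrow> (\<integral>e. q (cchain as bs \<theta> e t) \<partial>?P)" .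
  qed
qed

end
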